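(* During any execution of the Iterated Relaxation Procedure (described in the context), whenever the current matroid $\mathcal M'$ is contracted by an edge $e$, the singleton $\{e\}$ is independent in $\mathcal M'$ (i.e. $e$ is not a loop of $\mathcal M'$).
   Context: Setting: a hypergraph $G=(V,E)$ with every hyperedge having at most $k$ endpoints, capacities $b_v\ge0$, demands $d_{v,e}\ge0$ for each hyperedge $e$ and endpoint $v\in e$, profits $p_e\ge0$, and a matroid $\mathcal M=(E,\mathcal I)$ given by an independence oracle. For $W\subseteq V$, $F\subseteq E$, a matroid $\mathcal M'$ on ground set $F$ with rank function $r_{\mathcal M'}$, and values $b'_v$ ($v\in W$), let $LP[W,F,\mathcal M',b']$ be $\max\{\sum_{e\in F}p_ex_e: \sum_{e\in\delta_F(v)}d_{v,e}x_e\le b'_v\ \forall v\in W,\ x(A)\le r_{\mathcal M'}(A)\ \forall A\subseteq F,\ x\ge0\}$, where $\delta_F(v)$ is the set of edges of $F$ containing $v$. For $e\in F$, $\mathcal M'-e$ is the deletion and, when $\{e\}$ is independent, $\mathcal M'/e$ is the contraction ($A$ independent in $\mathcal M'/e$ iff $A\cup\{e\}$ independent in $\mathcal M'$). Iterated Relaxation Procedure: start with $W=V$, $F=E$, $\mathcal M'=\mathcal M$, $b'_v=b_v$, $M'=\emptyset$. While $F\neq\emptyset$: compute an optimal extreme point $x^*$ of $LP[W,F,\mathcal M',b']$; if $x^*_e=0$ for some $e\in F$, set $F\leftarrow F-\{e\}$, $\mathcal M'\leftarrow\mathcal M'-e$; else if $x^*_e=1$ for some $e\in F$, set $F\leftarrow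 F-\{e\}$, $\mathcal M'\leftarrow\mathcal M'/e$, $M'\leftarrow M'\cup\{e\}$ and $b'_v\leftarrow b'_v-d_{v,e}$ for each endpoint $v$ of $e$; otherwise remove from $W$ a vertex $v\in W$ minimizing $|\delta_F(v)|-x^*(\delta_F(v))$. Return $M'$. *)

theory Defs
  imports Complex_Main
begin

definition matroid :: "'e set \<Rightarrow> ('e set \<Rightarrow> bool) \<Rightarrow> bool" where
  "matroid G I \<longleftrightarrow> finite G
     \<and> (\<forall>A. I A \<longrightarrow> A \<subseteq> G)
     \<and> I {}
     \<and> (\<forall>A B. I B \<and> A \<subseteq> B \<longrightarrow> I A)
     \<and> (\<forall>A B. I A \<and> I B \<and> card A < card B \<longrightarrow> (\<exists>x\<in>B - A. I (insert x A)))"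

definition mrank :: "('e set \<Rightarrow> bool) \<Rightarrow> 'e set \<Rightarrow> nat" where
  "mrank I A = Max (card ` {B. B \<subseteq> A \<and> I B})"

definition mdelete :: "('e set \<Rightarrow> bool) \<Rightarrow> 'e \<Rightarrow> ('e set \<Rightarrow> bool)" where
  "mdelete I e = (\<lambda>A. I A \<and> e \<notin> A)"

definition mcontract :: "('e set \<Rightarrow> bool) \<Rightarrow> 'e \<Rightarrow> ('e set \<Rightarrow> bool)" where
  "mcontract I e = (\<lambda>A. e \<notin> A \<and> I (insert e A))"

text \<open>Hyperedges are abstract elements; ends e is the set of endpoints of e.
  Points of the LP are functions x :: 'e => real vanishing outside F.\<close>

definition delta :: "('e \<Rightarrow> 'v set) \<Rightarrow> 'e set \<Rightarrow> 'v \<Rightarrow> 'e set" where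
  "delta ends F v = {e \<in> F. v \<in> ends e}"

definition lp_feasible ::
  "('e \<Rightarrow> 'v set) \<Rightarrow> ('v \<Rightarrow> 'e \<Rightarrow> real) \<Rightarrow> 'v set \<Rightarrow> 'e set \<Rightarrow> ('e set \<Rightarrow> bool)
   \<Rightarrow> ('v \<Rightarrow> real) \<Rightarrow> ('e \<Rightarrow> real) \<Rightarrow> bool" where
  "lp_feasible ends d W F I b' x \<longleftrightarrow>
     (\<forall>e. e \<notin> F \<longrightarrow> x e = 0)
     \<and> (\<forall>e\<in>F. 0 \<le> x e)
     \<and> (\<forall>v\<in>W. (\<Sum>e\<in>delta ends F v. d v e * x e) \<le> b' v)
     \<and> (\<forall>A. A \<subseteq> F \<longrightarrow> sum x A \<le> real (mrank I A))"

definition lp_extreme ::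
  "('e \<Rightarrow> 'v set) \<Rightarrow> ('v \<Rightarrow> 'e \<Rightarrow> real) \<Rightarrow> 'v set \<Rightarrow> 'e set \<Rightarrow> ('e set \<Rightarrow> bool)
   \<Rightarrow> ('v \<Rightarrow> real) \<Rightarrow> ('e \<Rightarrow> real) \<Rightarrow> bool" where
  "lp_extreme ends d W F I b' x \<longleftrightarrow>
     lp_feasible ends d W F I b' x
     \<and> \<not> (\<exists>y z t. lp_feasible ends d W F I b' y \<and> lp_feasible ends d W F I b' z
              \<and> y \<noteq> z \<and> 0 < t \<and> t < 1 \<and> x = (\<lambda>e. t * y e + (1 - t) * z e))"

definition lp_opt_extreme ::
  "('e \<Rightarrow> 'v set) \<Rightarrow> ('v \<Rightarrow> 'e \<Rightarrow> real) \<Rightarrow> ('e \<Rightarrow> real) \<Rightarrow> 'v set \<Rightarrow> 'e set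
   \<Rightarrow> ('e set \<Rightarrow> bool) \<Rightarrow> ('v \<Rightarrow> real) \<Rightarrow> ('e \<Rightarrow> real) \<Rightarrow> bool" where
  "lp_opt_extreme ends d p W F I b' x \<longleftrightarrow>
     lp_extreme ends d W F I b' x
     \<and> (\<forall>y. lp_feasible ends d W F I b' y \<longrightarrow>
            (\<Sum>e\<in>F. p e * y e) \<le> (\<Sum>e\<in>F. p e * x e))"

text \<open>State: (W, F, M' (independence predicate on F), b', M').\<close>
type_synonym ('v, 'e) irstate =
  "'v set \<times> 'e set \<times> ('e set \<Rightarrow> bool) \<times> ('v \<Rightarrow> real) \<times> 'e set"

inductive ir_step ::
  "('e \<Rightarrow> 'v set) \<Rightarrow> ('v \<Rightarrow> 'e \<Rightarrow> real) \<Rightarrow> ('e \<Rightarrow> real)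
   \<Rightarrow> ('v, 'e) irstate \<Rightarrow> ('v, 'e) irstate \<Rightarrow> bool"
  for ends d p where
  delete_step:
    "\<lbrakk> F \<noteq> {}; lp_opt_extreme ends d p W F I b' x; e \<in> F; x e = 0 \<rbrakk>
     \<Longrightarrow> ir_step ends d p (W, F, I, b', M) (W, F - {e}, mdelete I e, b', M)"
| contract_step:
    "\<lbrakk> F \<noteq> {}; lp_opt_extreme ends d p W F I b' x; \<forall>f\<in>F. x f \<noteq> 0; e \<in> F; x e = 1 \<rbrakk>
     \<Longrightarrow> ir_step ends d p (W, F, I, b', M)
           (W, F - {e}, mcontract I e, (\<lambda>v. if v \<in> ends e then b' v - d v e else b' v),
            insert e M)"
| remove_step:
    "\<lbrakk> F \<noteq> {}; lp_opt_extreme ends d p W F I b' x; \<forall>f\<in>F. x f \<noteq> 0 \<and> x f \<noteq> 1;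
       v \<in> W;
       \<forall>u\<in>W. real (card (delta ends F v)) - sum x (delta ends F v)
               \<le> real (card (delta ends F u)) - sum x (delta ends F u) \<rbrakk>
     \<Longrightarrow> ir_step ends d p (W, F, I, b', M) (W - {v}, F, I, b', M)"

end

theory Submission
  imports Defs
begin

lemma core:
  assumes "I {}" and "lp_feasible ends d W F I b' x" and "e \<in> F" and "x e = 1"
  shows "I {e}"
proof -
  have "sum x {e} \<le> real (mrank I {e})" using assms(2,3) unfolding lp_feasible_def by auto
  hence ge: "1 \<le> mrank I {e}" using assms(4) by simp
  let ?S = "card ` {B. B \<subseteq> {e} \<and> I B}"
  have fin: "finite ?S" by (rule finite_imageI) (simp add: finite_subset[of _ "Pow {e}"])
  have ne: "?S \<noteq> {}" using assms(1) by blast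
  have "Max ?S \<in> ?S" using fin ne by (rule Max_in)
  then obtain B where B: "B \<subseteq> {e}" "I B" "card B = mrank I {e}" unfolding mrank_def by auto
  hence "B \<noteq> {}" using ge by auto
  hence "B = {e}" using B(1) by auto
  thus ?thesis using B(2) by simp
qed

lemma inv:
  assumes "(ir_step ends d p)\<^sup>*\<^sup>* s t" and "fst (snd (snd s)) {}"
  shows "fst (snd (snd t)) {}"
  using assms
proof (induction rule: rtranclp_induct)
  case base thus ?case by simp
next
  case (step y z)
  have IH: "fst (snd (snd y)) {}" using step.IH step.prems by simp
  from step.hyps(2) show ?case
  proof cases
    case (delete_step F W I b' x e M) thus ?thesis using IH by (simp add: mdelete_def)
  next
    case (contract_step F W I b' x e M)
    thus ?thesis using IH core[of I ends d W F b' x e] unfolding lp_opt_extreme_def lp_extreme_def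
      by (simp add: mcontract_def)
  next
    case (remove_step F W I b' x v M) thus ?thesis using IH by simp
  qed
qed

theorem lemma1:
  fixes V :: "'v set" and E :: "'e set" and ends :: "'e \<Rightarrow> 'v set" and k :: nat
    and b :: "'v \<Rightarrow> real" and d :: "'v \<Rightarrow> 'e \<Rightarrow> real" and p :: "'e \<Rightarrow> real"
    and I :: "'e set \<Rightarrow> bool"
  assumes "finite V" and "finite E"
    and "\<forall>e\<in>E. ends e \<subseteq> V \<and> card (ends e) \<le> k"
    and "\<forall>v\<in>V. 0 \<le> b v"
    and "\<forall>e\<in>E. \<forall>v\<in>ends e. 0 \<le> d v e"
    and "\<forall>e\<in>E. 0 \<le> p e"
    and "matroid E I"
    and "(ir_step ends d p)\<^sup>*\<^sup>* (V, E, I, b, {}) (W, F, I', b', M')"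
    and "F \<noteq> {}"
    and "lp_opt_extreme ends d p W F I' b' x"
    and "\<forall>f\<in>F. x f \<noteq> 0"
    and "e \<in> F" and "x e = 1"
  shows "I' {e}"
proof -
  have "I {}" using assms(7) unfolding matroid_def by blast
  hence "I' {}" using inv[OF assms(8)] by simp
  thus ?thesis using core[of I' ends d W F b' x e] assms(10,12,13)
    unfolding lp_opt_extreme_def lp_extreme_def by simp
qed

end
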